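(* Let $\Omega_1\subset\mathbb{R}^{d_1}$ and $\Omega_2\subset\mathbb{R}^{d_2}$ be measurable sets of finite positive Lebesgue measure, and let $\Lambda\subset\mathbb{R}^{d_1}\times\mathbb{R}^{d_2}$ be such that $(\Omega_1\times\Omega_2,\Lambda)$ is a spectral pair in $\mathbb{R}^{d_1+d_2}$. Let $P_1\Lambda=\{\lambda_1\in\mathbb{R}^{d_1}:\exists\lambda_2\in\mathbb{R}^{d_2}\text{ with }(\lambda_1,\lambda_2)\in\Lambda\}$ and, for $\lambda_1\in P_1\Lambda$, let $\Lambda(\lambda_1)=\{\lambda_2\in\mathbb{R}^{d_2}:(\lambda_1,\lambda_2)\in\Lambda\}$. Then for every $\lambda_1\in P_1\Lambda$, the exponentials $\{e^{(2)}_\xi:\xi\in\Lambda(\lambda_1)\}$ are mutually orthogonal in $\mathcal{L}^2(\Omega_2)$; and they are total in $\mathcal{L}^2(\Omega_2)$ if and only if $e^{(1)}_{\lambda_1}$ and $e^{(1)}_{\lambda_1'}$ are orthogonal in $\mathcal{L}^2(\Omega_1)$ for all $\lambda_1'\in P_1\Lambda\setminus\{\lambda_1\}$.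
   Context: For $\xi\in\mathbb{R}^{d_j}$, $e^{(j)}_\xi(x)=e^{i2\pi\xi\cdot x}$ for $x\in\mathbb{R}^{d_j}$ ($j=1,2$); similarly $e_\lambda$ on $\mathbb{R}^{d}$. For a measurable set $\Omega\subset\mathbb{R}^d$ of finite positive Lebesgue measure and a set $\Lambda\subset\mathbb{R}^d$, $(\Omega,\Lambda)$ is called a spectral pair if the exponentials $e_\lambda$, $\lambda\in\Lambda$, form an orthogonal basis of $\mathcal{L}^2(\Omega)$ (mutually orthogonal with dense linear span). A family is total in a Hilbert space if its linear span is dense. *)

theory Defs
  imports "HOL-Analysis.Analysis"
begin

definition expo :: "'a::euclidean_space \<Rightarrow> 'a \<Rightarrow> complex" where
  "expo \<xi> x = exp (\<i> * complex_of_real (2 * pi * (\<xi> \<bullet> x)))"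

definition L2_inner :: "'a::euclidean_space set \<Rightarrow> ('a \<Rightarrow> complex) \<Rightarrow> ('a \<Rightarrow> complex) \<Rightarrow> complex" where
  "L2_inner \<Omega> f g = (LINT x:\<Omega>|lebesgue. f x * cnj (g x))"

definition square_integrable :: "'a::euclidean_space set \<Rightarrow> ('a \<Rightarrow> complex) \<Rightarrow> bool" where
  "square_integrable \<Omega> f \<longleftrightarrow>
     f \<in> borel_measurable lebesgue \<and> set_integrable lebesgue \<Omega> (\<lambda>x. (norm (f x))\<^sup>2)"

definition exps_orthogonal :: "'a::euclidean_space set \<Rightarrow> 'a set \<Rightarrow> bool" where
  "exps_orthogonal \<Omega> \<Lambda> \<longleftrightarrow>
     (\<forall>l\<in>\<Lambda>. \<forall>\<mu>\<in>\<Lambda>. l \<noteq> \<mu> \<longrightarrow> L2_inner \<Omega> (expo l) (expo \<mu>) = 0)"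

definition exps_total :: "'a::euclidean_space set \<Rightarrow> 'a set \<Rightarrow> bool" where
  "exps_total \<Omega> \<Lambda> \<longleftrightarrow>
     (\<forall>f. square_integrable \<Omega> f \<longrightarrow>
        (\<forall>\<epsilon>>0. \<exists>S c. finite S \<and> S \<subseteq> \<Lambda> \<and>
            (LINT x:\<Omega>|lebesgue. (norm (f x - (\<Sum>\<xi>\<in>S. c \<xi> * expo \<xi> x)))\<^sup>2) < \<epsilon>))"

definition spectral_pair :: "'a::euclidean_space set \<Rightarrow> 'a set \<Rightarrow> bool" where
  "spectral_pair \<Omega> \<Lambda> \<longleftrightarrow>
     \<Omega> \<in> sets lebesgue \<and> 0 < emeasure lebesgue \<Omega> \<and> emeasure lebesgue \<Omega> < \<infinity> \<and>
     exps_orthogonal \<Omega> \<Lambda> \<and> exps_total \<Omega> \<Lambda>"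

end

theory Submission
  imports Defs
begin

lemma sigma_finite_lebesgue: "sigma_finite_measure (lebesgue :: 'a::euclidean_space measure)"
proof
  obtain A :: "nat \<Rightarrow> 'a set" where A: "range A \<subseteq> sets lborel" "(\<Union>i. A i) = space lborel"
    "\<And>i. emeasure lborel (A i) \<noteq> \<infinity>"
    using lborel.sigma_finite by metis
  show "\<exists>A::'a set set. countable A \<and> A \<subseteq> sets lebesgue \<and> \<Union> A = space lebesgue \<and> (\<forall>a\<in>A. emeasure lebesgue a \<noteq> \<infinity>)"
    apply (rule exI[of _ "range A"])
    using A by auto
qed

lemma lebesgue_decomp_emeasure:
  assumes S: "S \<in> sets lborel" and NN: "N \<subseteq> N'" and N': "N' \<in> null_sets lborel"
  shows "emeasure lebesgue (S \<union> N) = emeasure lborel S"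
proof -
  have "N' \<in> null_sets lebesgue"
    using N' by (rule null_sets_completionI)
  then have N: "N \<in> null_sets lebesgue"
    by (rule null_sets_completion_subset[OF NN])
  have S': "S \<in> sets lebesgue" using S by (rule sets_completionI_sets)
  have "emeasure lebesgue (S \<union> N) = emeasure lebesgue S"
    by (rule emeasure_Un_null_set[OF S' N])
  also have "\<dots> = emeasure lborel (main_part lborel S)"
    by (rule emeasure_completion[OF S'])
  also have "main_part lborel S = S" by (rule main_part[OF S])
  finally show ?thesis .
qed

lemma null_Times_UNIV:
  assumes "N' \<in> null_sets (lborel :: 'a::euclidean_space measure)"
  shows "N' \<times> (UNIV :: 'b::euclidean_space set) \<in> null_sets lborel"
    and "(UNIV :: 'b::euclidean_space set) \<times> N' \<in> null_sets lborel"
proof -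
  have N: "N' \<in> sets lborel" "emeasure lborel N' = 0" using assms by auto
  have U: "(UNIV :: 'b set) \<in> sets lborel" by simp
  have "emeasure (lborel \<Otimes>\<^sub>M lborel) (N' \<times> (UNIV :: 'b set)) = 0"
    using lborel.emeasure_pair_measure_Times[OF N(1) U] N(2) by simp
  moreover have "N' \<times> (UNIV :: 'b set) \<in> sets (lborel \<Otimes>\<^sub>M lborel)"
    using N(1) U by (rule pair_measureI)
  ultimately have "N' \<times> (UNIV :: 'b set) \<in> null_sets (lborel \<Otimes>\<^sub>M lborel)" by (rule null_setsI)
  then show "N' \<times> (UNIV :: 'b set) \<in> null_sets lborel" by (simp only: lborel_prod)
  have "emeasure (lborel \<Otimes>\<^sub>M lborel) ((UNIV :: 'b set) \<times> N') = 0"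
    using lborel.emeasure_pair_measure_Times[OF U N(1)] N(2) by simp
  moreover have "(UNIV :: 'b set) \<times> N' \<in> sets (lborel \<Otimes>\<^sub>M lborel)"
    using U N(1) by (rule pair_measureI)
  ultimately have "(UNIV :: 'b set) \<times> N' \<in> null_sets (lborel \<Otimes>\<^sub>M lborel)" by (rule null_setsI)
  then show "(UNIV :: 'b set) \<times> N' \<in> null_sets lborel" by (simp only: lborel_prod)
qed

lemma lebesgue_Times:
  assumes A: "A \<in> sets (lebesgue :: 'a::euclidean_space measure)"
    and B: "B \<in> sets (lebesgue :: 'b::euclidean_space measure)"
  shows "A \<times> B \<in> sets (lebesgue :: ('a \<times> 'b) measure)"
    and "emeasure (lebesgue :: ('a \<times> 'b) measure) (A \<times> B) = emeasure lebesgue A * emeasure lebesgue B"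
proof -
  obtain SA NA NA' where a: "A = SA \<union> NA" "NA \<subseteq> NA'" "NA' \<in> null_sets lborel" "SA \<in> sets lborel"
    using A by (rule sets_completionE)
  obtain SB NB NB' where b: "B = SB \<union> NB" "NB \<subseteq> NB'" "NB' \<in> null_sets lborel" "SB \<in> sets lborel"
    using B by (rule sets_completionE)
  define R where "R = A \<times> B - SA \<times> SB"
  define N where "N = NA' \<times> (UNIV :: 'b set) \<union> (UNIV :: 'a set) \<times> NB'"
  have N: "N \<in> null_sets (lborel :: ('a \<times> 'b) measure)"
    unfolding N_def using null_Times_UNIV[OF a(3)] null_Times_UNIV[OF b(3)] by blast
  have RN: "R \<subseteq> N" unfolding R_def N_def using a b by auto
  have S: "SA \<times> SB \<in> sets (lborel :: ('a \<times> 'b) measure)"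
  proof -
    have "SA \<times> SB \<in> sets (lborel \<Otimes>\<^sub>M lborel :: ('a \<times> 'b) measure)"
      using a(4) b(4) by (rule pair_measureI)
    then show ?thesis by (simp only: lborel_prod)
  qed
  have eq: "A \<times> B = SA \<times> SB \<union> R" unfolding R_def using a b by auto
  show "A \<times> B \<in> sets (lebesgue :: ('a \<times> 'b) measure)"
    using eq RN N S by (intro sets_completionI) auto
  have "emeasure (lebesgue :: ('a \<times> 'b) measure) (A \<times> B) = emeasure lborel (SA \<times> SB)"
    unfolding eq using S RN N by (rule lebesgue_decomp_emeasure)
  also have "\<dots> = emeasure (lborel \<Otimes>\<^sub>M lborel) (SA \<times> SB)" by (simp add: lborel_prod)
  also have "\<dots> = emeasure lborel SA * emeasure lborel SB"
    using a(4) b(4) by (rule lborel.emeasure_pair_measure_Times)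
  also have "emeasure lborel SA = emeasure lebesgue A"
    using lebesgue_decomp_emeasure[OF a(4) a(2) a(3)] a(1) by simp
  also have "emeasure lborel SB = emeasure lebesgue B"
    using lebesgue_decomp_emeasure[OF b(4) b(2) b(3)] b(1) by simp
  finally show "emeasure (lebesgue :: ('a \<times> 'b) measure) (A \<times> B) = emeasure lebesgue A * emeasure lebesgue B" .
qed

lemma measurable_fst_lebesgue:
  "fst \<in> (lebesgue :: ('a::euclidean_space \<times> 'b::euclidean_space) measure) \<rightarrow>\<^sub>M (lebesgue :: 'a measure)"
proof (rule measurableI)
  fix A :: "'a set" assume "A \<in> sets lebesgue"
  then have "A \<times> (UNIV :: 'b set) \<in> sets (lebesgue :: ('a \<times> 'b) measure)"
    by (intro lebesgue_Times) auto
  moreover have "fst -` A \<inter> space lebesgue = A \<times> (UNIV :: 'b set)" by auto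
  ultimately show "fst -` A \<inter> space (lebesgue :: ('a \<times> 'b) measure) \<in> sets lebesgue" by simp
qed auto

lemma measurable_snd_lebesgue:
  "snd \<in> (lebesgue :: ('a::euclidean_space \<times> 'b::euclidean_space) measure) \<rightarrow>\<^sub>M (lebesgue :: 'b measure)"
proof (rule measurableI)
  fix A :: "'b set" assume "A \<in> sets lebesgue"
  then have "(UNIV :: 'a set) \<times> A \<in> sets (lebesgue :: ('a \<times> 'b) measure)"
    by (intro lebesgue_Times) auto
  moreover have "snd -` A \<inter> space lebesgue = (UNIV :: 'a set) \<times> A" by auto
  ultimately show "snd -` A \<inter> space (lebesgue :: ('a \<times> 'b) measure) \<in> sets lebesgue" by simp
qed auto

lemma measurable_id_lebesgue_pair:
  "(\<lambda>x. x) \<in> (lebesgue :: ('a::euclidean_space \<times> 'b::euclidean_space) measure) \<rightarrow>\<^sub>M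
     (lebesgue \<Otimes>\<^sub>M lebesgue)"
  using measurable_Pair[OF measurable_fst_lebesgue measurable_snd_lebesgue] by simp

lemma distr_lebesgue_pair:
  "distr (lebesgue :: ('a::euclidean_space \<times> 'b::euclidean_space) measure) (lebesgue \<Otimes>\<^sub>M lebesgue) (\<lambda>x. x)
    = lebesgue \<Otimes>\<^sub>M lebesgue"
proof (rule pair_measure_eqI[symmetric])
  show "sigma_finite_measure (lebesgue :: 'a measure)" by (rule sigma_finite_lebesgue)
  show "sigma_finite_measure (lebesgue :: 'b measure)" by (rule sigma_finite_lebesgue)
  show "sets (lebesgue \<Otimes>\<^sub>M lebesgue) = sets (distr (lebesgue :: ('a \<times> 'b) measure) (lebesgue \<Otimes>\<^sub>M lebesgue) (\<lambda>x. x))"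
    by simp
  fix A :: "'a set" and B :: "'b set" assume A: "A \<in> sets lebesgue" and B: "B \<in> sets lebesgue"
  have "emeasure (distr (lebesgue :: ('a \<times> 'b) measure) (lebesgue \<Otimes>\<^sub>M lebesgue) (\<lambda>x. x)) (A \<times> B)
      = emeasure (lebesgue :: ('a \<times> 'b) measure) (A \<times> B)"
    using A B by (subst emeasure_distr[OF measurable_id_lebesgue_pair]) (auto intro: pair_measureI)
  also have "\<dots> = emeasure lebesgue A * emeasure lebesgue B" using A B by (rule lebesgue_Times)
  finally show "emeasure lebesgue A * emeasure lebesgue B =
     emeasure (distr (lebesgue :: ('a \<times> 'b) measure) (lebesgue \<Otimes>\<^sub>M lebesgue) (\<lambda>x. x)) (A \<times> B)" by simp
qed

interpretation leb: sigma_finite_measure "lebesgue :: 'a::euclidean_space measure"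
  by (rule sigma_finite_lebesgue)

interpretation leb_pair: pair_sigma_finite "lebesgue :: 'a::euclidean_space measure" "lebesgue :: 'b::euclidean_space measure" ..

lemma integral_lebesgue_pair:
  fixes h :: "'a::euclidean_space \<times> 'b::euclidean_space \<Rightarrow> 'c::{banach, second_countable_topology}"
  assumes "h \<in> borel_measurable (lebesgue \<Otimes>\<^sub>M lebesgue)"
  shows "integral\<^sup>L lebesgue h = integral\<^sup>L (lebesgue \<Otimes>\<^sub>M lebesgue) h"
  using integral_distr[OF measurable_id_lebesgue_pair assms] by (simp add: distr_lebesgue_pair)

lemma integrable_lebesgue_pair:
  fixes h :: "'a::euclidean_space \<times> 'b::euclidean_space \<Rightarrow> 'c::{banach, second_countable_topology}"
  assumes "h \<in> borel_measurable (lebesgue \<Otimes>\<^sub>M lebesgue)"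
  shows "integrable lebesgue h \<longleftrightarrow> integrable (lebesgue \<Otimes>\<^sub>M lebesgue) h"
  using integrable_distr_eq[OF measurable_id_lebesgue_pair assms] by (simp add: distr_lebesgue_pair)

lemma measurable_lebesgue_pair:
  assumes "h \<in> (lebesgue \<Otimes>\<^sub>M lebesgue) \<rightarrow>\<^sub>M N"
  shows "h \<in> (lebesgue :: ('a::euclidean_space \<times> 'b::euclidean_space) measure) \<rightarrow>\<^sub>M N"
  using measurable_compose[OF measurable_id_lebesgue_pair assms] by simp

lemma (in pair_sigma_finite) integrable_tensor:
  fixes u :: "'a \<Rightarrow> 'c::{real_normed_field, banach, second_countable_topology}" and v :: "'b \<Rightarrow> 'c"
  assumes u: "integrable M1 u" and v: "integrable M2 v"
  shows "integrable (M1 \<Otimes>\<^sub>M M2) (\<lambda>z. u (fst z) * v (snd z))"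
  unfolding integrable_iff_bounded
proof
  have [measurable]: "u \<in> borel_measurable M1" "v \<in> borel_measurable M2"
    using u v by auto
  show "(\<lambda>z. u (fst z) * v (snd z)) \<in> borel_measurable (M1 \<Otimes>\<^sub>M M2)" by measurable
  have "(\<integral>\<^sup>+ z. ennreal (norm (u (fst z) * v (snd z))) \<partial>(M1 \<Otimes>\<^sub>M M2))
      = (\<integral>\<^sup>+ x. \<integral>\<^sup>+ y. ennreal (norm (u x)) * ennreal (norm (v y)) \<partial>M2 \<partial>M1)"
    by (subst M2.nn_integral_fst[symmetric]) (auto simp: norm_mult ennreal_mult)
  also have "\<dots> = (\<integral>\<^sup>+ x. ennreal (norm (u x)) * (\<integral>\<^sup>+ y. ennreal (norm (v y)) \<partial>M2) \<partial>M1)"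
    by (subst nn_integral_cmult) auto
  also have "\<dots> = (\<integral>\<^sup>+ x. ennreal (norm (u x)) \<partial>M1) * (\<integral>\<^sup>+ y. ennreal (norm (v y)) \<partial>M2)"
    by (subst nn_integral_multc) auto
  also have "\<dots> < \<infinity>"
    using u v unfolding integrable_iff_bounded by (simp add: ennreal_mult_less_top)
  finally show "(\<integral>\<^sup>+ z. ennreal (norm (u (fst z) * v (snd z))) \<partial>(M1 \<Otimes>\<^sub>M M2)) < \<infinity>" .
qed

lemma (in pair_sigma_finite) integral_tensor:
  fixes u :: "'a \<Rightarrow> 'c::{real_normed_field, banach, second_countable_topology}" and v :: "'b \<Rightarrow> 'c"
  assumes u: "integrable M1 u" and v: "integrable M2 v"
  shows "integral\<^sup>L (M1 \<Otimes>\<^sub>M M2) (\<lambda>z. u (fst z) * v (snd z)) = integral\<^sup>L M1 u * integral\<^sup>L M2 v"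
proof -
  have "integral\<^sup>L (M1 \<Otimes>\<^sub>M M2) (\<lambda>z. u (fst z) * v (snd z)) = (\<integral>x. (\<integral>y. u x * v y \<partial>M2) \<partial>M1)"
    using integral_fst'[OF integrable_tensor[OF u v]] by simp
  also have "\<dots> = (\<integral>x. u x * integral\<^sup>L M2 v \<partial>M1)" by simp
  also have "\<dots> = integral\<^sup>L M1 u * integral\<^sup>L M2 v" by simp
  finally show ?thesis .
qed

lemma set_integrable_bounded:
  fixes f :: "'a \<Rightarrow> 'c::{banach, second_countable_topology}"
  assumes A: "A \<in> sets M" "emeasure M A < \<infinity>" and f: "f \<in> borel_measurable M"
    and B: "\<And>x. x \<in> A \<Longrightarrow> norm (f x) \<le> B"
  shows "set_integrable M A f"
proof (rule set_integrable_bound[of M A "\<lambda>_. B"])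
  show "set_integrable M A (\<lambda>_. B)"
    unfolding set_integrable_def
    using integrable_real_indicator[OF A] by (intro integrable_scaleR_left) auto
  show "set_borel_measurable M A f"
    unfolding set_borel_measurable_def using A f by measurable
  show "AE x in M. x \<in> A \<longrightarrow> norm (f x) \<le> norm B"
    using B by (auto intro!: always_eventually order_trans[OF _ abs_ge_self])
qed

lemma indicator_times_scaleR:
  fixes a b :: "'c::real_normed_algebra"
  shows "indicator (A \<times> B) z *\<^sub>R (a * b) = (indicator A (fst z) *\<^sub>R a) * (indicator B (snd z) *\<^sub>R b)"
  by (cases z) (auto split: split_indicator)

lemma set_tensor:
  fixes u :: "'a::euclidean_space \<Rightarrow> 'c::{real_normed_field, banach, second_countable_topology}"
    and v :: "'b::euclidean_space \<Rightarrow> 'c"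
  assumes u: "set_integrable lebesgue A u" and v: "set_integrable lebesgue B v"
  shows "set_integrable lebesgue (A \<times> B) (\<lambda>z. u (fst z) * v (snd z))"
    and "(LINT z:A \<times> B|lebesgue. u (fst z) * v (snd z)) = (LINT x:A|lebesgue. u x) * (LINT y:B|lebesgue. v y)"
proof -
  define u' where "u' x = indicator A x *\<^sub>R u x" for x
  define v' where "v' y = indicator B y *\<^sub>R v y" for y
  have iu: "integrable lebesgue u'" using u unfolding set_integrable_def u'_def .
  have iv: "integrable lebesgue v'" using v unfolding set_integrable_def v'_def .
  have [measurable]: "u' \<in> borel_measurable lebesgue" "v' \<in> borel_measurable lebesgue"
    using iu iv by auto
  have eq: "(\<lambda>z. indicator (A \<times> B) z *\<^sub>R (u (fst z) * v (snd z))) = (\<lambda>z. u' (fst z) * v' (snd z))"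
    unfolding u'_def v'_def by (rule ext, rule indicator_times_scaleR)
  have m: "(\<lambda>z. u' (fst z) * v' (snd z)) \<in> borel_measurable (lebesgue \<Otimes>\<^sub>M lebesgue)" by measurable
  show "set_integrable lebesgue (A \<times> B) (\<lambda>z. u (fst z) * v (snd z))"
    unfolding set_integrable_def eq integrable_lebesgue_pair[OF m]
    by (rule leb_pair.integrable_tensor[OF iu iv])
  show "(LINT z:A \<times> B|lebesgue. u (fst z) * v (snd z)) = (LINT x:A|lebesgue. u x) * (LINT y:B|lebesgue. v y)"
    unfolding set_lebesgue_integral_def eq integral_lebesgue_pair[OF m]
    using leb_pair.integral_tensor[OF iu iv] unfolding u'_def v'_def by simp
qed

lemma expo_pair: "expo (a, b) z = expo a (fst z) * expo b (snd z)"
  by (cases z) (simp add: expo_def algebra_simps exp_add[symmetric])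

lemma norm_expo[simp]: "norm (expo a x) = 1"
  unfolding expo_def by (rule norm_exp_i_times)

lemma expo_cnj_self[simp]: "expo a x * cnj (expo a x) = 1"
  by (metis complex_norm_square norm_expo of_real_1 power_one)

lemma expo_measurable_borel[measurable]: "expo a \<in> borel_measurable borel"
  unfolding expo_def by measurable

lemma expo_measurable[measurable]: "expo a \<in> borel_measurable lebesgue"
  using measurable_completion[of "expo a" lborel borel] by simp

lemma set_integral_sum_fin:
  fixes g :: "'i \<Rightarrow> 'a \<Rightarrow> 'c::{banach, second_countable_topology}"
  assumes "finite S" "\<And>i. i \<in> S \<Longrightarrow> set_integrable M A (g i)"
  shows "(LINT x:A|M. (\<Sum>i\<in>S. g i x)) = (\<Sum>i\<in>S. LINT x:A|M. g i x)"
proof -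
  have eq: "(\<lambda>x. indicator A x *\<^sub>R (\<Sum>i\<in>S. g i x)) = (\<lambda>x. \<Sum>i\<in>S. indicator A x *\<^sub>R g i x)"
    by (rule ext, rule scaleR_sum_right)
  show ?thesis
    unfolding set_lebesgue_integral_def eq
    by (rule Bochner_Integration.integral_sum[where I=S and f="\<lambda>i x. indicator A x *\<^sub>R g i x"])
      (use assms in \<open>auto simp: set_integrable_def\<close>)
qed

lemma borel_measurable_cnj[measurable]:
  assumes "f \<in> borel_measurable M"
  shows "(\<lambda>x. cnj (f x)) \<in> borel_measurable M"
proof -
  have "cnj \<in> borel_measurable borel"
    by (intro borel_measurable_continuous_onI continuous_intros)
  from measurable_compose[OF assms this] show ?thesis .
qed

lemma measure_pos:
  assumes "0 < emeasure M A" "emeasure M A < \<infinity>"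
  shows "0 < measure M A"
  using assms by (simp add: measure_def enn2real_positive_iff)

lemma expo_prod_integrable:
  assumes "A \<in> sets lebesgue" "emeasure lebesgue A < \<infinity>"
  shows "set_integrable lebesgue A (\<lambda>x. expo a x * cnj (expo b x))"
  by (rule set_integrable_bounded[OF assms, where B=1]) (auto simp: norm_mult)

lemma L2_inner_expo_self:
  assumes "A \<in> sets lebesgue" "emeasure lebesgue A < \<infinity>"
  shows "L2_inner A (expo a) (expo a) = of_real (measure lebesgue A)"
  unfolding L2_inner_def using assms by (simp add: set_integral_const scaleR_conv_of_real)

lemma L2_inner_pair:
  fixes A :: "'a::euclidean_space set" and B :: "'b::euclidean_space set"
  assumes A: "A \<in> sets lebesgue" "emeasure lebesgue A < \<infinity>"
    and B: "B \<in> sets lebesgue" "emeasure lebesgue B < \<infinity>"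
  shows "L2_inner (A \<times> B) (expo (a, b)) (expo (c, d)) = L2_inner A (expo a) (expo c) * L2_inner B (expo b) (expo d)"
proof -
  have eq: "expo (a, b) z * cnj (expo (c, d) z) =
     (expo a (fst z) * cnj (expo c (fst z))) * (expo b (snd z) * cnj (expo d (snd z)))" for z
    by (simp add: expo_pair)
  show ?thesis
    unfolding L2_inner_def eq
    by (rule set_tensor(2)[OF expo_prod_integrable[OF A] expo_prod_integrable[OF B]])
qed

lemma part_orth:
  fixes \<Omega>1 :: "'a::euclidean_space set" and \<Omega>2 :: "'b::euclidean_space set"
    and \<Lambda> :: "('a \<times> 'b) set"
  assumes "\<Omega>1 \<in> sets lebesgue" "0 < emeasure lebesgue \<Omega>1" "emeasure lebesgue \<Omega>1 < \<infinity>"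
    and "\<Omega>2 \<in> sets lebesgue" "emeasure lebesgue \<Omega>2 < \<infinity>"
    and sp: "spectral_pair (\<Omega>1 \<times> \<Omega>2) \<Lambda>"
  shows "exps_orthogonal \<Omega>2 {l2. (l1, l2) \<in> \<Lambda>}"
  unfolding exps_orthogonal_def
proof (intro ballI impI)
  fix x y assume x: "x \<in> {l2. (l1, l2) \<in> \<Lambda>}" and y: "y \<in> {l2. (l1, l2) \<in> \<Lambda>}" and xy: "x \<noteq> y"
  have "L2_inner (\<Omega>1 \<times> \<Omega>2) (expo (l1, x)) (expo (l1, y)) = 0"
    using sp x y xy unfolding spectral_pair_def exps_orthogonal_def by auto
  then have "of_real (measure lebesgue \<Omega>1) * L2_inner \<Omega>2 (expo x) (expo y) = 0"
    using assms by (simp add: L2_inner_pair L2_inner_expo_self)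
  moreover have "measure lebesgue \<Omega>1 \<noteq> 0" using measure_pos[OF assms(2,3)] by simp
  ultimately show "L2_inner \<Omega>2 (expo x) (expo y) = 0" by simp
qed

lemma norm_sum_expo_le:
  "norm (\<Sum>\<xi>\<in>S. c \<xi> * expo \<xi> x) \<le> (\<Sum>\<xi>\<in>S. norm (c \<xi>))"
  by (rule order_trans[OF norm_sum]) (simp add: norm_mult)

lemma norm_sum_expo_le':
  "norm (\<Sum>t\<in>T. d t * expo (k t) x) \<le> (\<Sum>t\<in>T. norm (d t))"
  by (rule order_trans[OF norm_sum]) (simp add: norm_mult)

lemma part_nec:
  fixes \<Omega>1 :: "'a::euclidean_space set" and \<Omega>2 :: "'b::euclidean_space set"
    and \<Lambda> :: "('a \<times> 'b) set"
  assumes O1: "\<Omega>1 \<in> sets lebesgue" "emeasure lebesgue \<Omega>1 < \<infinity>"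
    and O2: "\<Omega>2 \<in> sets lebesgue" "0 < emeasure lebesgue \<Omega>2" "emeasure lebesgue \<Omega>2 < \<infinity>"
    and sp: "spectral_pair (\<Omega>1 \<times> \<Omega>2) \<Lambda>"
    and tot: "exps_total \<Omega>2 {l2. (l1, l2) \<in> \<Lambda>}"
    and l1': "l1' \<in> fst ` \<Lambda>" "l1' \<noteq> l1"
  shows "L2_inner \<Omega>1 (expo l1) (expo l1') = 0"
proof (rule ccontr)
  assume A0: "L2_inner \<Omega>1 (expo l1) (expo l1') \<noteq> 0"
  obtain \<xi>' where \<xi>': "(l1', \<xi>') \<in> \<Lambda>" using l1' by force
  define m2 where "m2 = measure lebesgue \<Omega>2"
  have m2: "0 < m2" unfolding m2_def by (rule measure_pos[OF O2(2,3)])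
  define f where "f = expo \<xi>'"
  have sqf: "square_integrable \<Omega>2 f"
    unfolding square_integrable_def f_def
    by (auto intro!: set_integrable_bounded[OF O2(1,3), where B=1])
  obtain S c where S: "finite S" "S \<subseteq> {l2. (l1, l2) \<in> \<Lambda>}"
    and approx: "(LINT x:\<Omega>2|lebesgue. (norm (f x - (\<Sum>\<xi>\<in>S. c \<xi> * expo \<xi> x)))\<^sup>2) < m2 / 4"
    using tot sqf m2 unfolding exps_total_def by (meson zero_less_divide_iff zero_less_numeral)
  define h where "h x = (\<Sum>\<xi>\<in>S. c \<xi> * expo \<xi> x)" for x
  define C where "C = (\<Sum>\<xi>\<in>S. norm (c \<xi>))"
  have hb: "norm (h x) \<le> C" for x unfolding h_def C_def by (rule norm_sum_expo_le)
  have [measurable]: "h \<in> borel_measurable lebesgue" unfolding h_def by measurable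
  have [measurable]: "f \<in> borel_measurable lebesgue" unfolding f_def by measurable
  have orth: "L2_inner \<Omega>2 (expo \<xi>) (expo \<xi>') = 0" if "\<xi> \<in> S" for \<xi>
  proof -
    have "(l1, \<xi>) \<in> \<Lambda>" using S that by auto
    then have "L2_inner (\<Omega>1 \<times> \<Omega>2) (expo (l1, \<xi>)) (expo (l1', \<xi>')) = 0"
      using sp \<xi>' l1' unfolding spectral_pair_def exps_orthogonal_def by auto
    then have "L2_inner \<Omega>1 (expo l1) (expo l1') * L2_inner \<Omega>2 (expo \<xi>) (expo \<xi>') = 0"
      using O1 O2 by (simp add: L2_inner_pair)
    then show ?thesis using A0 by simp
  qed
  have I1: "(LINT y:\<Omega>2|lebesgue. h y * cnj (f y)) = 0"
  proof -
    have "(LINT y:\<Omega>2|lebesgue. h y * cnj (f y)) =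
        (LINT y:\<Omega>2|lebesgue. (\<Sum>\<xi>\<in>S. c \<xi> * (expo \<xi> y * cnj (expo \<xi>' y))))"
      unfolding h_def f_def by (simp add: sum_distrib_right mult.assoc)
    also have "\<dots> = (\<Sum>\<xi>\<in>S. c \<xi> * L2_inner \<Omega>2 (expo \<xi>) (expo \<xi>'))"
      using S(1) expo_prod_integrable[OF O2(1,3)]
      by (subst set_integral_sum_fin) (auto simp: L2_inner_def)
    also have "\<dots> = 0" using orth by simp
    finally show ?thesis .
  qed
  have I2: "(LINT y:\<Omega>2|lebesgue. f y * cnj (f y)) = of_real m2"
    using L2_inner_expo_self[OF O2(1,3)] unfolding L2_inner_def f_def m2_def .
  have int_hf: "set_integrable lebesgue \<Omega>2 (\<lambda>y. h y * cnj (f y))"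
    by (rule set_integrable_bounded[OF O2(1,3), where B=C]) (auto simp: norm_mult f_def hb)
  have int_ff: "set_integrable lebesgue \<Omega>2 (\<lambda>y. f y * cnj (f y))"
    unfolding f_def by (rule expo_prod_integrable[OF O2(1,3)])
  have I3: "(LINT y:\<Omega>2|lebesgue. (f y - h y) * cnj (f y)) = of_real m2"
    using set_integral_diff(2)[OF int_ff int_hf] I1 I2 by (simp add: algebra_simps)
  have int_d: "set_integrable lebesgue \<Omega>2 (\<lambda>y. (f y - h y) * cnj (f y))"
    using set_integral_diff(1)[OF int_ff int_hf] by (simp add: algebra_simps)
  have int_n: "set_integrable lebesgue \<Omega>2 (\<lambda>y. norm (f y - h y))"
    by (rule set_integrable_bounded[OF O2(1,3), where B="1 + C"])
       (auto intro!: order_trans[OF norm_triangle_ineq4] simp: f_def hb add_mono)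
  have int_q: "set_integrable lebesgue \<Omega>2 (\<lambda>y. 1/4 + (norm (f y - h y))\<^sup>2)"
  proof (rule set_integrable_bounded[OF O2(1,3), where B="1/4 + (1 + C)\<^sup>2"])
    fix y
    have "norm (f y - h y) \<le> 1 + C"
      by (rule order_trans[OF norm_triangle_ineq4]) (simp add: f_def hb add_mono)
    then have "(norm (f y - h y))\<^sup>2 \<le> (1 + C)\<^sup>2" by (simp add: power_mono)
    then show "norm (1/4 + (norm (f y - h y))\<^sup>2) \<le> 1/4 + (1 + C)\<^sup>2" by simp
  qed simp
  have int_sq: "set_integrable lebesgue \<Omega>2 (\<lambda>y. (norm (f y - h y))\<^sup>2)"
  proof -
    have "set_integrable lebesgue \<Omega>2 (\<lambda>y. (1/4 + (norm (f y - h y))\<^sup>2) - 1/4)"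
      by (rule set_integral_diff(1)[OF int_q]) (rule set_integrable_bounded[OF O2(1,3), where B="1/4"], auto)
    then show ?thesis by simp
  qed
  have "m2 = norm (LINT y:\<Omega>2|lebesgue. (f y - h y) * cnj (f y))" using I3 m2 by simp
  also have "\<dots> \<le> (LINT y:\<Omega>2|lebesgue. norm ((f y - h y) * cnj (f y)))"
    by (rule set_integral_norm_bound[OF int_d])
  also have "\<dots> = (LINT y:\<Omega>2|lebesgue. norm (f y - h y))"
    by (simp add: norm_mult f_def)
  also have "\<dots> \<le> (LINT y:\<Omega>2|lebesgue. 1/4 + (norm (f y - h y))\<^sup>2)"
  proof (rule set_integral_mono[OF int_n int_q])
    fix y
    have "0 \<le> (norm (f y - h y) - 1/2)\<^sup>2" by simp
    then show "norm (f y - h y) \<le> 1/4 + (norm (f y - h y))\<^sup>2"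
      by (simp add: power2_eq_square algebra_simps)
  qed
  also have "\<dots> = (LINT y:\<Omega>2|lebesgue. (1/4::real)) + (LINT y:\<Omega>2|lebesgue. (norm (f y - h y))\<^sup>2)"
    by (rule set_integral_add(2)[OF _ int_sq]) (rule set_integrable_bounded[OF O2(1,3), where B="1/4"], auto)
  also have "(LINT y:\<Omega>2|lebesgue. (1/4::real)) = m2 / 4"
    using O2 by (simp add: set_integral_const m2_def)
  also have "(LINT y:\<Omega>2|lebesgue. (norm (f y - h y))\<^sup>2) < m2 / 4"
    using approx unfolding h_def .
  finally show False using m2 by simp
qed

lemma L2_inner_expo_swap:
  "L2_inner A (expo b) (expo a) = cnj (L2_inner A (expo a) (expo b))"
proof -
  have "cnj (L2_inner A (expo a) (expo b)) =
      integral\<^sup>L lebesgue (\<lambda>x. cnj (indicator A x *\<^sub>R (expo a x * cnj (expo b x))))"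
    unfolding L2_inner_def set_lebesgue_integral_def by (rule Bochner_Integration.integral_cnj[symmetric])
  also have "\<dots> = L2_inner A (expo b) (expo a)"
    unfolding L2_inner_def set_lebesgue_integral_def by (simp add: mult.commute)
  finally show ?thesis by simp
qed

lemma set_integral_nonneg_real:
  fixes f :: "'a \<Rightarrow> real"
  assumes "\<And>x. x \<in> A \<Longrightarrow> 0 \<le> f x"
  shows "0 \<le> (LINT x:A|M. f x)"
  unfolding set_lebesgue_integral_def
  using assms by (intro Bochner_Integration.integral_nonneg) (auto split: split_indicator)

lemma key_ineq:
  fixes A :: "'a::euclidean_space set" and k :: "'t \<Rightarrow> 'a"
  assumes A: "A \<in> sets lebesgue" "emeasure lebesgue A < \<infinity>"
    and T: "finite T" "\<And>t. t \<in> T \<Longrightarrow> L2_inner A (expo e) (expo (k t)) = 0"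
  shows "measure lebesgue A * (norm a)\<^sup>2 \<le>
     (LINT x:A|lebesgue. (norm (expo e x * a - (\<Sum>t\<in>T. d t * expo (k t) x)))\<^sup>2)"
proof -
  define K where "K x = (\<Sum>t\<in>T. d t * expo (k t) x)" for x
  define D where "D = (\<Sum>t\<in>T. norm (d t))"
  define E where "E = expo e"
  have Kb: "norm (K x) \<le> D" for x unfolding K_def D_def by (rule norm_sum_expo_le')
  have D0: "0 \<le> D" unfolding D_def by (simp add: sum_nonneg)
  have [measurable]: "K \<in> borel_measurable lebesgue" unfolding K_def by measurable
  have [measurable]: "E \<in> borel_measurable lebesgue" unfolding E_def by measurable
  have nE[simp]: "norm (E x) = 1" for x unfolding E_def by simp
  have EE[simp]: "E x * cnj (E x) = 1" for x unfolding E_def by simp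
  have swap: "L2_inner A (expo (k t)) (expo e) = 0" if "t \<in> T" for t
    using T(2)[OF that] by (subst L2_inner_expo_swap) simp
  have J1: "(LINT x:A|lebesgue. E x * cnj (K x)) = 0"
  proof -
    have "(LINT x:A|lebesgue. E x * cnj (K x)) =
       (LINT x:A|lebesgue. (\<Sum>t\<in>T. cnj (d t) * (expo e x * cnj (expo (k t) x))))"
      unfolding K_def E_def by (simp add: sum_distrib_left algebra_simps)
    also have "\<dots> = (\<Sum>t\<in>T. cnj (d t) * L2_inner A (expo e) (expo (k t)))"
      using T(1) expo_prod_integrable[OF A]
      by (subst set_integral_sum_fin) (auto simp: L2_inner_def)
    also have "\<dots> = 0" using T(2) by simp
    finally show ?thesis .
  qed
  have J2: "(LINT x:A|lebesgue. K x * cnj (E x)) = 0"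
  proof -
    have "(LINT x:A|lebesgue. K x * cnj (E x)) =
       (LINT x:A|lebesgue. (\<Sum>t\<in>T. d t * (expo (k t) x * cnj (expo e x))))"
      unfolding K_def E_def sum_distrib_right by (simp only: mult.assoc)
    also have "\<dots> = (\<Sum>t\<in>T. d t * L2_inner A (expo (k t)) (expo e))"
      using T(1) expo_prod_integrable[OF A]
      by (subst set_integral_sum_fin) (auto simp: L2_inner_def)
    also have "\<dots> = 0" using swap by simp
    finally show ?thesis .
  qed
  have iP: "set_integrable lebesgue A (\<lambda>x. complex_of_real ((norm a)\<^sup>2))"
  proof (rule set_integrable_bounded[OF A, where B="(norm a)\<^sup>2"])
    fix x show "norm (complex_of_real ((norm a)\<^sup>2)) \<le> (norm a)\<^sup>2"
      by (simp only: norm_of_real abs_power2 abs_norm_cancel order_refl)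
  qed simp
  have iQ: "set_integrable lebesgue A (\<lambda>x. a * (E x * cnj (K x)))"
    by (rule set_integrable_bounded[OF A, where B="norm a * D"])
       (auto simp: norm_mult intro!: mult_left_mono Kb)
  have iR: "set_integrable lebesgue A (\<lambda>x. cnj a * (K x * cnj (E x)))"
    by (rule set_integrable_bounded[OF A, where B="norm a * D"])
       (auto simp: norm_mult intro!: mult_left_mono Kb)
  have iS: "set_integrable lebesgue A (\<lambda>x. K x * cnj (K x))"
    by (rule set_integrable_bounded[OF A, where B="D * D"])
       (auto simp: norm_mult intro!: mult_mono Kb D0)
  have iS': "set_integrable lebesgue A (\<lambda>x. (norm (K x))\<^sup>2)"
    by (rule set_integrable_bounded[OF A, where B="D * D"])
       (auto simp: power2_eq_square intro!: mult_mono Kb D0)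
  have iPQ: "set_integrable lebesgue A (\<lambda>x. complex_of_real ((norm a)\<^sup>2) - a * (E x * cnj (K x)))"
    by (rule set_integral_diff(1)[OF iP iQ])
  have iPQR: "set_integrable lebesgue A (\<lambda>x. (complex_of_real ((norm a)\<^sup>2) - a * (E x * cnj (K x)))
      - cnj a * (K x * cnj (E x)))"
    by (rule set_integral_diff(1)[OF iPQ iR])
  have pw: "complex_of_real ((norm (E x * a - K x))\<^sup>2) =
      ((complex_of_real ((norm a)\<^sup>2) - a * (E x * cnj (K x))) - cnj a * (K x * cnj (E x))) + K x * cnj (K x)" for x
  proof -
    have "complex_of_real ((norm (E x * a - K x))\<^sup>2) = (E x * a - K x) * cnj (E x * a - K x)"
      by (rule complex_norm_square)
    also have "\<dots> = (a * cnj a) * (E x * cnj (E x)) - a * (E x * cnj (K x)) - cnj a * (K x * cnj (E x)) + K x * cnj (K x)"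
      by (simp add: algebra_simps)
    also have "a * cnj a = complex_of_real ((norm a)\<^sup>2)" by (rule complex_norm_square[symmetric])
    finally show ?thesis by simp
  qed
  have "complex_of_real (LINT x:A|lebesgue. (norm (E x * a - K x))\<^sup>2) =
      (LINT x:A|lebesgue. complex_of_real ((norm (E x * a - K x))\<^sup>2))"
    by (rule set_integral_complex_of_real[symmetric])
  also have "\<dots> = (LINT x:A|lebesgue. ((complex_of_real ((norm a)\<^sup>2) - a * (E x * cnj (K x))) - cnj a * (K x * cnj (E x))) + K x * cnj (K x))"
    unfolding pw ..
  also have "\<dots> = ((LINT x:A|lebesgue. complex_of_real ((norm a)\<^sup>2)) - (LINT x:A|lebesgue. a * (E x * cnj (K x))))
       - (LINT x:A|lebesgue. cnj a * (K x * cnj (E x))) + (LINT x:A|lebesgue. K x * cnj (K x))"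
    by (simp only: set_integral_add(2)[OF iPQR iS] set_integral_diff(2)[OF iPQ iR] set_integral_diff(2)[OF iP iQ])
  also have "\<dots> = complex_of_real (measure lebesgue A * (norm a)\<^sup>2) + (LINT x:A|lebesgue. K x * cnj (K x))"
    using J1 J2 A by (simp add: set_integral_const scaleR_conv_of_real)
  also have "(LINT x:A|lebesgue. K x * cnj (K x)) = (LINT x:A|lebesgue. complex_of_real ((norm (K x))\<^sup>2))"
    by (simp only: complex_norm_square)
  also have "\<dots> = complex_of_real (LINT x:A|lebesgue. (norm (K x))\<^sup>2)"
    by (rule set_integral_complex_of_real)
  finally have eq: "(LINT x:A|lebesgue. (norm (E x * a - K x))\<^sup>2) =
      measure lebesgue A * (norm a)\<^sup>2 + (LINT x:A|lebesgue. (norm (K x))\<^sup>2)"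
    by (simp only: of_real_add[symmetric] of_real_eq_iff)
  have "0 \<le> (LINT x:A|lebesgue. (norm (K x))\<^sup>2)"
    by (rule set_integral_nonneg_real) simp
  then show ?thesis using eq unfolding K_def E_def by simp
qed

lemma expo_split: "expo l z = expo (fst l) (fst z) * expo (snd l) (snd z)"
  by (cases l) (simp add: expo_pair)

lemma sq_diff_le: "(norm (u - v))\<^sup>2 \<le> 2 * (norm u)\<^sup>2 + 2 * (norm (v::complex))\<^sup>2"
proof -
  have "norm (u - v) \<le> norm u + norm v" by (rule norm_triangle_ineq4)
  then have "(norm (u - v))\<^sup>2 \<le> (norm u + norm v)\<^sup>2" by (simp add: power_mono)
  also have "\<dots> \<le> 2 * (norm u)\<^sup>2 + 2 * (norm v)\<^sup>2"
    using sum_squares_ge_zero[of "norm u - norm v" 0]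
    by (simp add: power2_eq_square algebra_simps)
  finally show ?thesis .
qed

lemma part_suff:
  fixes \<Omega>1 :: "'a::euclidean_space set" and \<Omega>2 :: "'b::euclidean_space set"
    and \<Lambda> :: "('a \<times> 'b) set"
  assumes O1: "\<Omega>1 \<in> sets lebesgue" "0 < emeasure lebesgue \<Omega>1" "emeasure lebesgue \<Omega>1 < \<infinity>"
    and O2: "\<Omega>2 \<in> sets lebesgue" "emeasure lebesgue \<Omega>2 < \<infinity>"
    and sp: "spectral_pair (\<Omega>1 \<times> \<Omega>2) \<Lambda>"
    and orth: "\<forall>l1' \<in> fst ` \<Lambda> - {l1}. L2_inner \<Omega>1 (expo l1) (expo l1') = 0"
  shows "exps_total \<Omega>2 {l2. (l1, l2) \<in> \<Lambda>}"
  unfolding exps_total_def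
proof (intro allI impI)
  fix f :: "'b \<Rightarrow> complex" and \<epsilon> :: real
  assume sqf: "square_integrable \<Omega>2 f" and \<epsilon>: "0 < \<epsilon>"
  define m1 where "m1 = measure lebesgue \<Omega>1"
  have m1: "0 < m1" unfolding m1_def by (rule measure_pos[OF O1(2,3)])
  have fm[measurable]: "f \<in> borel_measurable lebesgue" using sqf unfolding square_integrable_def by auto
  have fi: "set_integrable lebesgue \<Omega>2 (\<lambda>y. (norm (f y))\<^sup>2)" using sqf unfolding square_integrable_def by auto
  have [measurable]: "\<Omega>1 \<in> sets lebesgue" "\<Omega>2 \<in> sets lebesgue" using O1 O2 by auto
  have OO[measurable]: "\<Omega>1 \<times> \<Omega>2 \<in> sets (lebesgue \<Otimes>\<^sub>M lebesgue)"
    using O1(1) O2(1) by (rule pair_measureI)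
  define F where "F z = expo l1 (fst z) * f (snd z)" for z
  have FmLL[measurable]: "F \<in> borel_measurable (lebesgue \<Otimes>\<^sub>M lebesgue)" unfolding F_def by measurable
  have one_int: "set_integrable lebesgue \<Omega>1 (\<lambda>_. 1::real)"
    by (rule set_integrable_bounded[OF O1(1,3), where B=1]) auto
  have sqF: "square_integrable (\<Omega>1 \<times> \<Omega>2) F"
    unfolding square_integrable_def
  proof
    show "F \<in> borel_measurable lebesgue" by (rule measurable_lebesgue_pair[OF FmLL])
    have "(\<lambda>z. (norm (F z))\<^sup>2) = (\<lambda>z. (\<lambda>_. 1::real) (fst z) * (\<lambda>y. (norm (f y))\<^sup>2) (snd z))"
      by (simp add: F_def norm_mult)
    then show "set_integrable lebesgue (\<Omega>1 \<times> \<Omega>2) (\<lambda>z. (norm (F z))\<^sup>2)"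
      using set_tensor(1)[OF one_int fi] by simp
  qed
  have "0 < \<epsilon> * m1" using \<epsilon> m1 by simp
  then obtain S c where S: "finite S" "S \<subseteq> \<Lambda>"
    and approx: "(LINT z:\<Omega>1 \<times> \<Omega>2|lebesgue. (norm (F z - (\<Sum>p\<in>S. c p * expo p z)))\<^sup>2) < \<epsilon> * m1"
    using sp sqF unfolding spectral_pair_def exps_total_def by blast
  define S' where "S' = Pair l1 -` S"
  have injP: "inj (Pair l1)" by (auto simp: inj_on_def)
  have S'fin: "finite S'" unfolding S'_def using S(1) injP by (rule finite_vimageI)
  have S'sub: "S' \<subseteq> {l2. (l1, l2) \<in> \<Lambda>}" unfolding S'_def using S(2) by auto
  define g where "g y = (\<Sum>\<xi>\<in>S'. c (l1, \<xi>) * expo \<xi> y)" for y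
  define S0 where "S0 = S - Pair l1 ` S'"
  define H where "H x y = (\<Sum>p\<in>S0. (c p * expo (snd p) y) * expo (fst p) x)" for x y
  define G where "G z = (\<Sum>p\<in>S. c p * expo p z)" for z
  have decomp: "G (x, y) = expo l1 x * g y + H x y" for x y
  proof -
    have sub: "Pair l1 ` S' \<subseteq> S" unfolding S'_def by auto
    have "G (x, y) = (\<Sum>p\<in>S0. c p * expo p (x, y)) + (\<Sum>p\<in>Pair l1 ` S'. c p * expo p (x, y))"
      unfolding G_def S0_def by (rule sum.subset_diff[OF sub S(1)])
    also have "(\<Sum>p\<in>Pair l1 ` S'. c p * expo p (x, y)) = (\<Sum>\<xi>\<in>S'. c (l1, \<xi>) * expo (l1, \<xi>) (x, y))"
      by (subst sum.reindex) (auto intro: inj_on_subset[OF injP])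
    also have "\<dots> = expo l1 x * g y"
      unfolding g_def by (simp add: sum_distrib_left expo_pair algebra_simps)
    also have "(\<Sum>p\<in>S0. c p * expo p (x, y)) = H x y"
      unfolding H_def by (intro sum.cong refl) (simp add: expo_split[of _ "(x, y)"] algebra_simps)
    finally show ?thesis by simp
  qed
  have pointwise: "m1 * (norm (f y - g y))\<^sup>2 \<le> (LINT x:\<Omega>1|lebesgue. (norm (F (x, y) - G (x, y)))\<^sup>2)" for y
  proof -
    have eq: "F (x, y) - G (x, y) = expo l1 x * (f y - g y) - H x y" for x
      unfolding decomp F_def by (simp add: algebra_simps)
    have "m1 * (norm (f y - g y))\<^sup>2 \<le>
        (LINT x:\<Omega>1|lebesgue. (norm (expo l1 x * (f y - g y) - (\<Sum>p\<in>S0. (c p * expo (snd p) y) * expo (fst p) x)))\<^sup>2)"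
      unfolding m1_def
    proof (rule key_ineq[OF O1(1,3)])
      show "finite S0" unfolding S0_def using S(1) by simp
      fix t assume "t \<in> S0"
      then have "fst t \<in> fst ` \<Lambda> - {l1}" unfolding S0_def S'_def using S(2) by (cases t) force
      then show "L2_inner \<Omega>1 (expo l1) (expo (fst t)) = 0" using orth by blast
    qed
    then show ?thesis unfolding eq H_def .
  qed
  define C where "C = (\<Sum>p\<in>S. norm (c p))"
  have Gb: "norm (G z) \<le> C" for z unfolding G_def C_def by (rule norm_sum_expo_le)
  have C0: "0 \<le> C" unfolding C_def by (simp add: sum_nonneg)
  have GmLL[measurable]: "G \<in> borel_measurable (lebesgue \<Otimes>\<^sub>M lebesgue)"
  proof -
    have "(\<lambda>z. expo l z) \<in> borel_measurable (lebesgue \<Otimes>\<^sub>M lebesgue)" for l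
      unfolding expo_split[of l] by measurable
    then show ?thesis unfolding G_def by measurable
  qed
  define \<psi> where "\<psi> z = indicator (\<Omega>1 \<times> \<Omega>2) z *\<^sub>R (norm (F z - G z))\<^sup>2" for z
  have \<psi>m[measurable]: "\<psi> \<in> borel_measurable (lebesgue \<Otimes>\<^sub>M lebesgue)" unfolding \<psi>_def by measurable
  define v where "v y = indicator \<Omega>2 y *\<^sub>R (2 * (norm (f y))\<^sup>2 + 2 * C\<^sup>2)" for y
  have vi: "integrable lebesgue v"
  proof -
    have "set_integrable lebesgue \<Omega>2 (\<lambda>y. 2 * (norm (f y))\<^sup>2 + 2 * C\<^sup>2)"
      by (rule set_integral_add(1)[OF set_integrable_mult_right[OF fi]])
         (rule set_integrable_bounded[OF O2, where B="2 * C\<^sup>2"], auto)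
    then show ?thesis unfolding set_integrable_def v_def .
  qed
  have \<psi>i: "integrable (lebesgue \<Otimes>\<^sub>M lebesgue) \<psi>"
  proof (rule Bochner_Integration.integrable_bound[OF leb_pair.integrable_tensor[OF integrable_real_indicator[OF O1(1,3)] vi] \<psi>m])
    show "AE z in lebesgue \<Otimes>\<^sub>M lebesgue. norm (\<psi> z) \<le> norm (indicator \<Omega>1 (fst z) * v (snd z))"
    proof (rule always_eventually, rule allI)
      fix z :: "'a \<times> 'b"
      show "norm (\<psi> z) \<le> norm (indicator \<Omega>1 (fst z) * v (snd z))"
      proof (cases "z \<in> \<Omega>1 \<times> \<Omega>2")
        case True
        have "(norm (F z - G z))\<^sup>2 \<le> 2 * (norm (F z))\<^sup>2 + 2 * (norm (G z))\<^sup>2" by (rule sq_diff_le)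
        also have "norm (F z) = norm (f (snd z))" by (simp add: F_def norm_mult)
        also have "(norm (G z))\<^sup>2 \<le> C\<^sup>2" using Gb[of z] by (simp add: power_mono)
        finally have "(norm (F z - G z))\<^sup>2 \<le> 2 * (norm (f (snd z)))\<^sup>2 + 2 * C\<^sup>2" by simp
        then show ?thesis using True by (cases z) (simp add: \<psi>_def v_def)
      next
        case False
        then show ?thesis by (simp add: \<psi>_def)
      qed
    qed
  qed
  have "(LINT z:\<Omega>1 \<times> \<Omega>2|lebesgue. (norm (F z - G z))\<^sup>2) = integral\<^sup>L (lebesgue \<Otimes>\<^sub>M lebesgue) \<psi>"
    unfolding set_lebesgue_integral_def \<psi>_def[symmetric] by (rule integral_lebesgue_pair[OF \<psi>m])
  also have "\<dots> = (\<integral>y. (\<integral>x. \<psi> (x, y) \<partial>lebesgue) \<partial>lebesgue)"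
    using leb_pair.integral_snd[of "\<lambda>x y. \<psi> (x, y)"] \<psi>i by simp
  finally have tot_eq: "(LINT z:\<Omega>1 \<times> \<Omega>2|lebesgue. (norm (F z - G z))\<^sup>2) = (\<integral>y. (\<integral>x. \<psi> (x, y) \<partial>lebesgue) \<partial>lebesgue)" .
  have inner: "(\<integral>x. \<psi> (x, y) \<partial>lebesgue) = indicator \<Omega>2 y * (LINT x:\<Omega>1|lebesgue. (norm (F (x, y) - G (x, y)))\<^sup>2)" for y
  proof -
    have "(\<lambda>x. \<psi> (x, y)) = (\<lambda>x. indicator \<Omega>2 y * (indicator \<Omega>1 x *\<^sub>R (norm (F (x, y) - G (x, y)))\<^sup>2))"
      by (rule ext) (simp add: \<psi>_def indicator_times)
    then show ?thesis unfolding set_lebesgue_integral_def by simp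
  qed
  have goal: "(LINT y:\<Omega>2|lebesgue. (norm (f y - g y))\<^sup>2) < \<epsilon>"
  proof (cases "set_integrable lebesgue \<Omega>2 (\<lambda>y. (norm (f y - g y))\<^sup>2)")
    case True
    have "m1 * (LINT y:\<Omega>2|lebesgue. (norm (f y - g y))\<^sup>2) = (LINT y:\<Omega>2|lebesgue. m1 * (norm (f y - g y))\<^sup>2)"
      by simp
    also have "\<dots> = (\<integral>y. indicator \<Omega>2 y *\<^sub>R (m1 * (norm (f y - g y))\<^sup>2) \<partial>lebesgue)"
      unfolding set_lebesgue_integral_def ..
    also have "\<dots> \<le> (\<integral>y. (\<integral>x. \<psi> (x, y) \<partial>lebesgue) \<partial>lebesgue)"
    proof (rule integral_mono)
      show "integrable lebesgue (\<lambda>y. indicator \<Omega>2 y *\<^sub>R (m1 * (norm (f y - g y))\<^sup>2))"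
        using set_integrable_mult_right[OF True, of m1] unfolding set_integrable_def by simp
      show "integrable lebesgue (\<lambda>y. \<integral>x. \<psi> (x, y) \<partial>lebesgue)"
        using leb_pair.integrable_snd[of "\<lambda>x y. \<psi> (x, y)"] \<psi>i by simp
      fix y
      show "indicator \<Omega>2 y *\<^sub>R (m1 * (norm (f y - g y))\<^sup>2) \<le> (\<integral>x. \<psi> (x, y) \<partial>lebesgue)"
        unfolding inner using pointwise[of y] by (simp split: split_indicator)
    qed
    also have "\<dots> < \<epsilon> * m1" using approx tot_eq unfolding G_def by simp
    finally show ?thesis using m1 by (simp add: mult.commute)
  next
    case False
    then have "(LINT y:\<Omega>2|lebesgue. (norm (f y - g y))\<^sup>2) = 0"
      unfolding set_lebesgue_integral_def set_integrable_def by (rule not_integrable_integral_eq)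
    then show ?thesis using \<epsilon> by simp
  qed
  show "\<exists>S c. finite S \<and> S \<subseteq> {l2. (l1, l2) \<in> \<Lambda>} \<and>
      (LINT x:\<Omega>2|lebesgue. (norm (f x - (\<Sum>\<xi>\<in>S. c \<xi> * expo \<xi> x)))\<^sup>2) < \<epsilon>"
  proof (rule exI[of _ S'], rule exI[of _ "\<lambda>\<xi>. c (l1, \<xi>)"], intro conjI)
    show "finite S'" by (rule S'fin)
    show "S' \<subseteq> {l2. (l1, l2) \<in> \<Lambda>}" by (rule S'sub)
    show "(LINT x:\<Omega>2|lebesgue. (norm (f x - (\<Sum>\<xi>\<in>S'. c (l1, \<xi>) * expo \<xi> x)))\<^sup>2) < \<epsilon>"
      using goal unfolding g_def .
  qed
qed

theorem lemma2p3:
  fixes \<Omega>1 :: "'a::euclidean_space set" and \<Omega>2 :: "'b::euclidean_space set"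
    and \<Lambda> :: "('a \<times> 'b) set"
  assumes "\<Omega>1 \<in> sets lebesgue" "0 < emeasure lebesgue \<Omega>1" "emeasure lebesgue \<Omega>1 < \<infinity>"
    and "\<Omega>2 \<in> sets lebesgue" "0 < emeasure lebesgue \<Omega>2" "emeasure lebesgue \<Omega>2 < \<infinity>"
    and "spectral_pair (\<Omega>1 \<times> \<Omega>2) \<Lambda>"
  shows "\<forall>l1 \<in> fst ` \<Lambda>.
           exps_orthogonal \<Omega>2 {l2. (l1, l2) \<in> \<Lambda>} \<and>
           (exps_total \<Omega>2 {l2. (l1, l2) \<in> \<Lambda>} \<longleftrightarrow>
              (\<forall>l1' \<in> fst ` \<Lambda> - {l1}. L2_inner \<Omega>1 (expo l1) (expo l1') = 0))"
proof (intro ballI conjI)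
  fix l1 assume "l1 \<in> fst ` \<Lambda>"
  show "exps_orthogonal \<Omega>2 {l2. (l1, l2) \<in> \<Lambda>}"
    by (rule part_orth[OF assms(1,2,3,4,6,7)])
  show "exps_total \<Omega>2 {l2. (l1, l2) \<in> \<Lambda>} \<longleftrightarrow>
      (\<forall>l1' \<in> fst ` \<Lambda> - {l1}. L2_inner \<Omega>1 (expo l1) (expo l1') = 0)"
  proof
    assume tot: "exps_total \<Omega>2 {l2. (l1, l2) \<in> \<Lambda>}"
    show "\<forall>l1' \<in> fst ` \<Lambda> - {l1}. L2_inner \<Omega>1 (expo l1) (expo l1') = 0"
    proof
      fix l1' assume "l1' \<in> fst ` \<Lambda> - {l1}"
      then have "l1' \<in> fst ` \<Lambda>" "l1' \<noteq> l1" by auto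
      then show "L2_inner \<Omega>1 (expo l1) (expo l1') = 0"
        by (rule part_nec[OF assms(1,3,4,5,6,7) tot])
    qed
  next
    assume orth: "\<forall>l1' \<in> fst ` \<Lambda> - {l1}. L2_inner \<Omega>1 (expo l1) (expo l1') = 0"
    show "exps_total \<Omega>2 {l2. (l1, l2) \<in> \<Lambda>}"
      by (rule part_suff[OF assms(1,2,3,4,6,7) orth])
  qed
qed

end
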